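(* Let $\Xi$ be smooth with $\Xi(0,0,0,0)=0$ and $\frac{\partial\Xi}{\partial\psi}(0,0,0,0)<0$, and let $T>0$. There exist $C_\Xi>0$ and $\varepsilon_2>0$ such that if $\omega_{1i}(t,\psi),\omega_{2i}(t,\psi)$ ($i=1,2,3$) are $C^1$ functions, $T$-periodic in $t$, with $\|\omega_{1i}\|_{C^1}\le\varepsilon_2$ and $\|\omega_{2i}\|_{C^1}\le\varepsilon_2$, and $\psi_1^*,\psi_2^*$ are the $T$-periodic solutions of $\psi_j'(t)=\Xi(\psi_j(t),\omega_{j1}(t,\psi_j(t)),\omega_{j2}(t,\psi_j(t)),\omega_{j3}(t,\psi_j(t)))$, $j=1,2$, then $$\|\psi_1^*-\psi_2^*\|\le(1+C_\Xi T\varepsilon_2)\exp(\Xi_{\psi,0}T)\frac1{\Xi_{\psi,0}}\sum_{i=1}^3\Xi_{\omega_{i,0}}\|\omega_{1i}-\omega_{2i}\|,$$ $$\|\psi_1^{*\prime}-\psi_2^{*\prime}\|\le(1+C_\Xi T\varepsilon_2)\exp(\Xi_{\psi,0}T)\sum_{i=1}^3\Xi_{\omega_{i,0}}\|\omega_{1i}-\omega_{2i}\|+(1+C_\Xi\varepsilon_2)\sum_{i=1}^3\Xi_{\omega_{i,0}}\|\omega_{1i}-\omega_{2i}\|.$$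
   Context: $\|\cdot\|$ denotes the sup ($C^0$) norm. $\Xi_{\psi,0}=\big|\frac{\partial\Xi}{\partial\psi}(0,0,0,0)\big|$ and $\Xi_{\omega_{i,0}}=1+\big|\frac{\partial\Xi}{\partial\omega_i}(0,0,0,0)\big|$ for $i=1,2,3$. For small $C^1$ data each such equation has a unique $T$-periodic solution near $0$. *)

theory Defs
  imports "HOL-Analysis.Analysis"
begin

fun iter_pderiv :: "'n list \<Rightarrow> (real^'n \<Rightarrow> real) \<Rightarrow> real^'n \<Rightarrow> real" where
  "iter_pderiv [] f = f"
| "iter_pderiv (i # is) f =
     (\<lambda>x. deriv (\<lambda>s. iter_pderiv is f (x + s *\<^sub>R axis i 1)) 0)"

definition smooth_fun :: "(real^'n \<Rightarrow> real) \<Rightarrow> bool" where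
  "smooth_fun f \<longleftrightarrow>
     (\<forall>is. continuous_on UNIV (iter_pderiv is f) \<and>
        (\<forall>i x. (\<lambda>s. iter_pderiv is f (x + s *\<^sub>R axis i 1)) differentiable (at 0)))"

definition smooth4 :: "(real \<Rightarrow> real \<Rightarrow> real \<Rightarrow> real \<Rightarrow> real) \<Rightarrow> bool" where
  "smooth4 Xi \<longleftrightarrow> smooth_fun (\<lambda>x::real^4. Xi (x$1) (x$2) (x$3) (x$4))"

definition Xi_psi0 :: "(real \<Rightarrow> real \<Rightarrow> real \<Rightarrow> real \<Rightarrow> real) \<Rightarrow> real" where
  "Xi_psi0 Xi = \<bar>deriv (\<lambda>p. Xi p 0 0 0) 0\<bar>"

definition pderiv_omega0 :: "(real \<Rightarrow> real \<Rightarrow> real \<Rightarrow> real \<Rightarrow> real) \<Rightarrow> nat \<Rightarrow> real" where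
  "pderiv_omega0 Xi i =
     (if i = 1 then deriv (\<lambda>s. Xi 0 s 0 0) 0
      else if i = 2 then deriv (\<lambda>s. Xi 0 0 s 0) 0
      else deriv (\<lambda>s. Xi 0 0 0 s) 0)"

definition Xi_omega0 :: "(real \<Rightarrow> real \<Rightarrow> real \<Rightarrow> real \<Rightarrow> real) \<Rightarrow> nat \<Rightarrow> real" where
  "Xi_omega0 Xi i = 1 + \<bar>pderiv_omega0 Xi i\<bar>"

definition C1_fun2 :: "(real \<Rightarrow> real \<Rightarrow> real) \<Rightarrow> bool" where
  "C1_fun2 w \<longleftrightarrow> (\<exists>D :: real \<times> real \<Rightarrow> ((real \<times> real) \<Rightarrow>\<^sub>L real).
      (\<forall>z. ((\<lambda>(t, p). w t p) has_derivative blinfun_apply (D z)) (at z)) \<and>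
      continuous_on UNIV D)"

definition periodic_t :: "real \<Rightarrow> (real \<Rightarrow> real \<Rightarrow> real) \<Rightarrow> bool" where
  "periodic_t T w \<longleftrightarrow> (\<forall>t p. w (t + T) p = w t p)"

text \<open>C^1 norm (max convention): sup over (t,psi) of max(|w|, |d_t w|, |d_psi w|).
  "norm <= e" written out pointwise.\<close>
definition C1_norm_le :: "(real \<Rightarrow> real \<Rightarrow> real) \<Rightarrow> real \<Rightarrow> bool" where
  "C1_norm_le w e \<longleftrightarrow> (\<forall>t p. \<bar>w t p\<bar> \<le> e \<and>
      \<bar>deriv (\<lambda>s. w s p) t\<bar> \<le> e \<and> \<bar>deriv (\<lambda>s. w t s) p\<bar> \<le> e)"

definition sup_norm2 :: "(real \<Rightarrow> real \<Rightarrow> real) \<Rightarrow> real" where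
  "sup_norm2 w = (SUP z \<in> UNIV. \<bar>w (fst z) (snd z)\<bar>)"

definition sup_norm1 :: "(real \<Rightarrow> real) \<Rightarrow> real" where
  "sup_norm1 f = (SUP t \<in> UNIV. \<bar>f t\<bar>)"

definition periodic_solution ::
  "real \<Rightarrow> (real \<Rightarrow> real \<Rightarrow> real \<Rightarrow> real \<Rightarrow> real) \<Rightarrow> (nat \<Rightarrow> real \<Rightarrow> real \<Rightarrow> real)
     \<Rightarrow> (real \<Rightarrow> real) \<Rightarrow> bool" where
  "periodic_solution T Xi w \<psi> \<longleftrightarrow>
     (\<forall>t. \<psi> (t + T) = \<psi> t) \<and>
     (\<forall>t. (\<psi> has_real_derivative
             Xi (\<psi> t) (w 1 t (\<psi> t)) (w 2 t (\<psi> t)) (w 3 t (\<psi> t))) (at t))"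

end

theory Submission imports Defs begin

definition mk4 :: "real \<Rightarrow> real \<Rightarrow> real \<Rightarrow> real \<Rightarrow> real^4" where
  "mk4 s a b c = (\<chi> j. if j = 1 then s else if j = 2 then a else if j = 3 then b else c)"

definition F4 :: "(real \<Rightarrow> real \<Rightarrow> real \<Rightarrow> real \<Rightarrow> real) \<Rightarrow> real^4 \<Rightarrow> real" where
  "F4 Xi = (\<lambda>x. Xi (x$1) (x$2) (x$3) (x$4))"

definition PD :: "(real \<Rightarrow> real \<Rightarrow> real \<Rightarrow> real \<Rightarrow> real) \<Rightarrow> 4 \<Rightarrow> real^4 \<Rightarrow> real" where
  "PD Xi k = iter_pderiv [k] (F4 Xi)"

lemma F4_mk4[simp]: "F4 Xi (mk4 s a b c) = Xi s a b c"
  by (simp add: F4_def mk4_def)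

lemma mk4_axis1: "mk4 s a b c + u *\<^sub>R axis 1 1 = mk4 (s+u) a b c"
  by (simp add: mk4_def vec_eq_iff axis_def)
lemma mk4_axis2: "mk4 s a b c + u *\<^sub>R axis 2 1 = mk4 s (a+u) b c"
  by (simp add: mk4_def vec_eq_iff axis_def)
lemma mk4_axis3: "mk4 s a b c + u *\<^sub>R axis 3 1 = mk4 s a (b+u) c"
  by (simp add: mk4_def vec_eq_iff axis_def)
lemma mk4_axis4: "mk4 s a b c + u *\<^sub>R axis 4 1 = mk4 s a b (c+u)"
  by (simp add: mk4_def vec_eq_iff axis_def forall_4)

lemma mk4_zero: "mk4 0 0 0 0 = 0"
  by (simp add: mk4_def vec_eq_iff)

lemma smooth_partial:
  assumes "smooth4 Xi"
  shows "((\<lambda>u. F4 Xi (x + u *\<^sub>R axis k 1)) has_real_derivative PD Xi k x) (at 0)"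
proof -
  have "(\<lambda>u. F4 Xi (x + u *\<^sub>R axis k 1)) differentiable (at 0)"
  proof -
    have "\<forall>i x. (\<lambda>s. iter_pderiv [] (F4 Xi) (x + s *\<^sub>R axis i 1)) differentiable (at 0)"
      using assms unfolding smooth4_def smooth_fun_def F4_def by blast
    then show ?thesis by simp
  qed
  then show ?thesis
    by (simp add: PD_def DERIV_deriv_iff_real_differentiable)
qed

lemma smooth_cont:
  assumes "smooth4 Xi"
  shows "continuous_on UNIV (PD Xi k)"
proof -
  have "continuous_on UNIV (iter_pderiv [k] (F4 Xi))"
  proof -
    have "smooth_fun (F4 Xi)" using assms unfolding smooth4_def F4_def .
    then show ?thesis unfolding smooth_fun_def by (rule conjunct1[OF spec[of _ "[k]"]])
  qed
  then show ?thesis by (simp add: PD_def)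
qed

lemma shift_deriv:
  assumes "((\<lambda>u. f (s + u)) has_real_derivative D) (at 0)"
  shows "(f has_real_derivative D) (at s)"
  using DERIV_shift[of f D 0 s] assms by (simp add: add.commute)

lemma deriv1: assumes "smooth4 Xi"
  shows "((\<lambda>s. Xi s a b c) has_real_derivative PD Xi 1 (mk4 s a b c)) (at s)"
proof -
  have e: "(\<lambda>u. F4 Xi (mk4 s a b c + u *\<^sub>R axis 1 1)) = (\<lambda>u. Xi (s+u) a b c)"
    by (simp only: mk4_axis1 F4_mk4)
  show ?thesis
    by (rule shift_deriv) (use smooth_partial[OF assms, of "mk4 s a b c" 1] in \<open>simp only: e\<close>)
qed
lemma deriv2: assumes "smooth4 Xi"
  shows "((\<lambda>a. Xi s a b c) has_real_derivative PD Xi 2 (mk4 s a b c)) (at a)"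
proof -
  have e: "(\<lambda>u. F4 Xi (mk4 s a b c + u *\<^sub>R axis 2 1)) = (\<lambda>u. Xi s (a+u) b c)"
    by (simp only: mk4_axis2 F4_mk4)
  show ?thesis
    by (rule shift_deriv) (use smooth_partial[OF assms, of "mk4 s a b c" 2] in \<open>simp only: e\<close>)
qed
lemma deriv3: assumes "smooth4 Xi"
  shows "((\<lambda>b. Xi s a b c) has_real_derivative PD Xi 3 (mk4 s a b c)) (at b)"
proof -
  have e: "(\<lambda>u. F4 Xi (mk4 s a b c + u *\<^sub>R axis 3 1)) = (\<lambda>u. Xi s a (b+u) c)"
    by (simp only: mk4_axis3 F4_mk4)
  show ?thesis
    by (rule shift_deriv) (use smooth_partial[OF assms, of "mk4 s a b c" 3] in \<open>simp only: e\<close>)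
qed
lemma deriv4: assumes "smooth4 Xi"
  shows "((\<lambda>c. Xi s a b c) has_real_derivative PD Xi 4 (mk4 s a b c)) (at c)"
proof -
  have e: "(\<lambda>u. F4 Xi (mk4 s a b c + u *\<^sub>R axis 4 1)) = (\<lambda>u. Xi s a b (c+u))"
    by (simp only: mk4_axis4 F4_mk4)
  show ?thesis
    by (rule shift_deriv) (use smooth_partial[OF assms, of "mk4 s a b c" 4] in \<open>simp only: e\<close>)
qed

lemma PD0_1: "PD Xi 1 0 = deriv (\<lambda>p. Xi p 0 0 0) 0"
proof -
  have "(\<lambda>u. F4 Xi (0 + u *\<^sub>R axis 1 1)) = (\<lambda>u. Xi u 0 0 0)"
    using mk4_axis1[of 0 0 0 0] by (simp only: mk4_zero) simp
  then show ?thesis by (simp add: PD_def)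
qed
lemma PD0_2: "PD Xi 2 0 = pderiv_omega0 Xi 1"
proof -
  have "(\<lambda>u. F4 Xi (0 + u *\<^sub>R axis 2 1)) = (\<lambda>u. Xi 0 u 0 0)"
    using mk4_axis2[of 0 0 0 0] by (simp only: mk4_zero) simp
  then show ?thesis by (simp add: PD_def pderiv_omega0_def)
qed
lemma PD0_3: "PD Xi 3 0 = pderiv_omega0 Xi 2"
proof -
  have "(\<lambda>u. F4 Xi (0 + u *\<^sub>R axis 3 1)) = (\<lambda>u. Xi 0 0 u 0)"
    using mk4_axis3[of 0 0 0 0] by (simp only: mk4_zero) simp
  then show ?thesis by (simp add: PD_def pderiv_omega0_def)
qed
lemma PD0_4: "PD Xi 4 0 = pderiv_omega0 Xi 3"
proof -
  have "(\<lambda>u. F4 Xi (0 + u *\<^sub>R axis 4 1)) = (\<lambda>u. Xi 0 0 0 u)"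
    using mk4_axis4[of 0 0 0 0] by (simp only: mk4_zero) simp
  then show ?thesis by (simp add: PD_def pderiv_omega0_def)
qed

lemma norm_mk4: assumes "\<bar>s\<bar> \<le> m" "\<bar>a\<bar> \<le> m" "\<bar>b\<bar> \<le> m" "\<bar>c\<bar> \<le> m"
  shows "norm (mk4 s a b c) \<le> 4 * m"
proof -
  have "norm (mk4 s a b c) \<le> (\<Sum>i\<in>UNIV. \<bar>mk4 s a b c $ i\<bar>)" by (rule norm_le_l1_cart)
  also have "\<dots> \<le> of_nat (card (UNIV::4 set)) * m"
    by (rule sum_bounded_above) (use assms in \<open>auto simp: mk4_def\<close>)
  finally show ?thesis by simp
qed

lemma mvt_any:
  assumes "\<And>x. (f has_real_derivative f' x) (at x)"
  shows "\<exists>z. min a b \<le> z \<and> z \<le> max a b \<and> f b - f a = (b - a) * f' z"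
proof -
  consider "a < b" | "a = b" | "b < a" by linarith
  then show ?thesis
  proof cases
    case 1
    then obtain z where "z > a" "z < b" "f b - f a = (b - a) * f' z"
      using MVT2[of a b f f'] assms by blast
    then show ?thesis by (intro exI[of _ z]) auto
  next
    case 2 then show ?thesis by auto
  next
    case 3
    then obtain z where "z > b" "z < a" "f a - f b = (a - b) * f' z"
      using MVT2[of b a f f'] assms by blast
    then show ?thesis by (intro exI[of _ z]) (auto simp: algebra_simps)
  qed
qed

lemma periodic_int:
  assumes "\<forall>t. e (t + T) = (e t :: real)"
  shows "e (t + real_of_int k * T) = e t"
proof -
  have nat: "e (x + real n * T) = e x" for x n
  proof (induction n)
    case 0 then show ?case by simp
  next
    case (Suc n)
    have "x + real (Suc n) * T = (x + real n * T) + T" by (simp add: algebra_simps)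
    then show ?case using assms[rule_format, of "x + real n * T"] Suc by (simp only:)
  qed
  show ?thesis
  proof (cases "k \<ge> 0")
    case True
    then show ?thesis using nat[of t "nat k"] by simp
  next
    case False
    then have "e (t + real_of_int k * T + real (nat (-k)) * T) = e (t + real_of_int k * T)"
      using nat by blast
    moreover have "t + real_of_int k * T + real (nat (-k)) * T = t" using False by (simp add: algebra_simps)
    ultimately show ?thesis by simp
  qed
qed

lemma periodic_max:
  fixes e :: "real \<Rightarrow> real"
  assumes "T > 0" "\<forall>t. e (t + T) = e t" "continuous_on UNIV e"
  shows "\<exists>t0. \<forall>t. \<bar>e t\<bar> \<le> \<bar>e t0\<bar>"
proof -
  have "continuous_on {0..T} (\<lambda>t. \<bar>e t\<bar>)"
    using assms(3) by (intro continuous_intros) (auto intro: continuous_on_subset)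
  then obtain t0 where t0: "t0 \<in> {0..T}" "\<forall>y\<in>{0..T}. \<bar>e y\<bar> \<le> \<bar>e t0\<bar>"
    using continuous_attains_sup[of "{0..T}" "\<lambda>t. \<bar>e t\<bar>"] assms(1) by auto
  have "\<bar>e t\<bar> \<le> \<bar>e t0\<bar>" for t
  proof -
    define k where "k = \<lfloor>t / T\<rfloor>"
    define s where "s = t - real_of_int k * T"
    have "real_of_int k \<le> t / T" "t / T < real_of_int k + 1" unfolding k_def by linarith+
    then have "real_of_int k * T \<le> t" "t < (real_of_int k + 1) * T" using assms(1)
      by (auto simp: field_simps)
    then have s: "s \<in> {0..T}" unfolding s_def by (auto simp: algebra_simps)
    have "e t = e (s + real_of_int k * T)" unfolding s_def by simp
    also have "\<dots> = e s" by (rule periodic_int[OF assms(2)])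
    finally show ?thesis using t0 s by simp
  qed
  then show ?thesis by blast
qed

lemma deriv_zero_absmax:
  fixes e :: "real \<Rightarrow> real"
  assumes "(e has_real_derivative E) (at t0)" "\<forall>t. \<bar>e t\<bar> \<le> \<bar>e t0\<bar>" "e t0 \<noteq> 0"
  shows "E = 0"
proof (cases "e t0 > 0")
  case True
  show ?thesis
    by (rule DERIV_local_max[OF assms(1), of 1]) (use assms(2) True in \<open>auto simp: abs_le_iff\<close>)
next
  case False
  with assms(3) have "e t0 < 0" by simp
  then show ?thesis
    by (intro DERIV_local_min[OF assms(1), of 1]) (use assms(2) in \<open>auto simp: abs_le_iff\<close>)
qed

lemma C1_deriv:
  assumes "C1_fun2 w"
  shows "((\<lambda>s. w t s) has_real_derivative deriv (\<lambda>s. w t s) p) (at p)"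
proof -
  obtain D :: "real \<times> real \<Rightarrow> ((real \<times> real) \<Rightarrow>\<^sub>L real)" where
    D: "\<forall>z. ((\<lambda>(t, p). w t p) has_derivative blinfun_apply (D z)) (at z)"
    using assms unfolding C1_fun2_def by blast
  have "((\<lambda>s. (t, s)) has_derivative (\<lambda>h. (0, h))) (at p)"
    by (auto intro!: derivative_eq_intros)
  from has_derivative_compose[OF this D[rule_format, of "(t,p)"]]
  have "((\<lambda>s. w t s) has_derivative (\<lambda>h. blinfun_apply (D (t, p)) (0, h))) (at p)"
    by simp
  then have "(\<lambda>s. w t s) differentiable (at p)" unfolding differentiable_def by blast
  then show ?thesis by (simp add: DERIV_deriv_iff_real_differentiable)
qed

lemma le_sup_norm2:
  assumes "\<forall>t p. \<bar>f t p\<bar> \<le> K"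
  shows "\<bar>f t p\<bar> \<le> sup_norm2 f"
  unfolding sup_norm2_def
  by (rule cSUP_upper2[of _ _ "(t,p)"]) (use assms in \<open>auto intro!: bdd_aboveI2\<close>)

lemma sum13: "(\<Sum>i\<in>{1..3::nat}. f i) = f 1 + f 2 + (f 3 :: real)"
proof -
  have "{1..3::nat} = {1,2,3}" by auto
  then show ?thesis by (simp add: add.assoc)
qed

lemma near0:
  assumes "smooth4 Xi" "\<eta> > 0"
  shows "\<exists>r>0. \<forall>x. norm x < r \<longrightarrow> \<bar>PD Xi k x - PD Xi k 0\<bar> < \<eta>"
proof -
  have "continuous_on UNIV (PD Xi k)" by (rule smooth_cont[OF assms(1)])
  then obtain d where "d > 0" "\<forall>x'. dist x' 0 < d \<longrightarrow> dist (PD Xi k x') (PD Xi k 0) < \<eta>"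
    unfolding continuous_on_iff using assms(2) by (metis UNIV_I)
  then show ?thesis by (auto simp: dist_real_def)
qed

lemma coordMVT:
  assumes "\<And>s. (f has_real_derivative f' s) (at s)"
    and "\<And>s. min x y \<le> s \<Longrightarrow> s \<le> max x y \<Longrightarrow> \<bar>f' s - c0\<bar> < \<eta>"
  shows "\<exists>c. \<bar>c - c0\<bar> < \<eta> \<and> f x - f y = (x - y) * c"
proof -
  obtain z where "min y x \<le> z" "z \<le> max y x" "f x - f y = (x - y) * f' z"
    using mvt_any[of f f' y x] assms(1) by blast
  then show ?thesis using assms(2)[of z] by (intro exI[of _ "f' z"]) auto
qed

lemma between_abs: "\<bar>x\<bar> \<le> m \<Longrightarrow> \<bar>y\<bar> \<le> m \<Longrightarrow> min x y \<le> s \<Longrightarrow> s \<le> max x (y::real) \<Longrightarrow> \<bar>s\<bar> \<le> m"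
  by auto

lemma pointwise:
  assumes sm: "smooth4 Xi"
    and near: "\<forall>k x. norm x < r \<longrightarrow> \<bar>PD Xi k x - PD Xi k 0\<bar> < \<eta>"
    and m: "4 * m < r"
    and bp: "\<bar>p1\<bar> \<le> m" "\<bar>p2\<bar> \<le> m"
    and bu: "\<bar>u1\<bar> \<le> m" "\<bar>u2\<bar> \<le> m" "\<bar>u3\<bar> \<le> m"
    and bv: "\<bar>v1\<bar> \<le> m" "\<bar>v2\<bar> \<le> m" "\<bar>v3\<bar> \<le> m"
    and bz: "\<bar>z1\<bar> \<le> m" "\<bar>z2\<bar> \<le> m" "\<bar>z3\<bar> \<le> m"
  shows "\<exists>c0 c1 c2 c3 d1 d2 d3.
     Xi p1 u1 u2 u3 - Xi p2 z1 z2 z3 = (p1 - p2) * c0 + (u1 - v1) * c1 + (u2 - v2) * c2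
        + (u3 - v3) * c3 + (v1 - z1) * d1 + (v2 - z2) * d2 + (v3 - z3) * d3
     \<and> \<bar>c0 - PD Xi 1 0\<bar> < \<eta> \<and> \<bar>c1 - PD Xi 2 0\<bar> < \<eta> \<and> \<bar>c2 - PD Xi 3 0\<bar> < \<eta>
     \<and> \<bar>c3 - PD Xi 4 0\<bar> < \<eta> \<and> \<bar>d1 - PD Xi 2 0\<bar> < \<eta> \<and> \<bar>d2 - PD Xi 3 0\<bar> < \<eta>
     \<and> \<bar>d3 - PD Xi 4 0\<bar> < \<eta>"
proof -
  have nb: "\<And>k s a b c. \<bar>s\<bar> \<le> m \<Longrightarrow> \<bar>a\<bar> \<le> m \<Longrightarrow> \<bar>b\<bar> \<le> m \<Longrightarrow> \<bar>c\<bar> \<le> m \<Longrightarrow>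
      \<bar>PD Xi k (mk4 s a b c) - PD Xi k 0\<bar> < \<eta>"
  proof -
    fix k s a b c assume h: "\<bar>s\<bar> \<le> m" "\<bar>a\<bar> \<le> m" "\<bar>b\<bar> \<le> m" "\<bar>c\<bar> \<le> m"
    have "norm (mk4 s a b c) \<le> 4 * m" using h by (rule norm_mk4)
    then have "norm (mk4 s a b c) < r" using m by linarith
    then show "\<bar>PD Xi k (mk4 s a b c) - PD Xi k 0\<bar> < \<eta>" using near by blast
  qed
  obtain c0 where c0: "\<bar>c0 - PD Xi 1 0\<bar> < \<eta>" "Xi p1 u1 u2 u3 - Xi p2 u1 u2 u3 = (p1 - p2) * c0"
  proof -
    have "\<exists>c. \<bar>c - PD Xi 1 0\<bar> < \<eta> \<and> (\<lambda>s. Xi s u1 u2 u3) p1 - (\<lambda>s. Xi s u1 u2 u3) p2 = (p1 - p2) * c"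
    proof (rule coordMVT)
      show "((\<lambda>s. Xi s u1 u2 u3) has_real_derivative (\<lambda>s. PD Xi 1 (mk4 s u1 u2 u3)) s) (at s)" for s
        using deriv1[OF sm] by simp
      fix s assume "min p1 p2 \<le> s" "s \<le> max p1 p2"
      then have "\<bar>s\<bar> \<le> m" using between_abs[of p1 m p2 s] bp bu by blast
      then show "\<bar>(\<lambda>s. PD Xi 1 (mk4 s u1 u2 u3)) s - PD Xi 1 0\<bar> < \<eta>" using bp bu by (simp add: nb)
    qed
    then show ?thesis using that by auto
  qed
  obtain c1 where c1: "\<bar>c1 - PD Xi 2 0\<bar> < \<eta>" "Xi p2 u1 u2 u3 - Xi p2 v1 u2 u3 = (u1 - v1) * c1"
  proof -
    have "\<exists>c. \<bar>c - PD Xi 2 0\<bar> < \<eta> \<and> (\<lambda>s. Xi p2 s u2 u3) u1 - (\<lambda>s. Xi p2 s u2 u3) v1 = (u1 - v1) * c"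
    proof (rule coordMVT)
      show "((\<lambda>s. Xi p2 s u2 u3) has_real_derivative (\<lambda>s. PD Xi 2 (mk4 p2 s u2 u3)) s) (at s)" for s
        using deriv2[OF sm] by simp
      fix s assume "min u1 v1 \<le> s" "s \<le> max u1 v1"
      then have "\<bar>s\<bar> \<le> m" using between_abs[of u1 m v1 s] bp bu bv by blast
      then show "\<bar>(\<lambda>s. PD Xi 2 (mk4 p2 s u2 u3)) s - PD Xi 2 0\<bar> < \<eta>" using bp bu bv by (simp add: nb)
    qed
    then show ?thesis using that by auto
  qed
  obtain c2 where c2: "\<bar>c2 - PD Xi 3 0\<bar> < \<eta>" "Xi p2 v1 u2 u3 - Xi p2 v1 v2 u3 = (u2 - v2) * c2"
  proof -
    have "\<exists>c. \<bar>c - PD Xi 3 0\<bar> < \<eta> \<and> (\<lambda>s. Xi p2 v1 s u3) u2 - (\<lambda>s. Xi p2 v1 s u3) v2 = (u2 - v2) * c"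
    proof (rule coordMVT)
      show "((\<lambda>s. Xi p2 v1 s u3) has_real_derivative (\<lambda>s. PD Xi 3 (mk4 p2 v1 s u3)) s) (at s)" for s
        using deriv3[OF sm] by simp
      fix s assume "min u2 v2 \<le> s" "s \<le> max u2 v2"
      then have "\<bar>s\<bar> \<le> m" using between_abs[of u2 m v2 s] bp bu bv by blast
      then show "\<bar>(\<lambda>s. PD Xi 3 (mk4 p2 v1 s u3)) s - PD Xi 3 0\<bar> < \<eta>" using bp bu bv by (simp add: nb)
    qed
    then show ?thesis using that by auto
  qed
  obtain c3 where c3: "\<bar>c3 - PD Xi 4 0\<bar> < \<eta>" "Xi p2 v1 v2 u3 - Xi p2 v1 v2 v3 = (u3 - v3) * c3"
  proof -
    have "\<exists>c. \<bar>c - PD Xi 4 0\<bar> < \<eta> \<and> (\<lambda>s. Xi p2 v1 v2 s) u3 - (\<lambda>s. Xi p2 v1 v2 s) v3 = (u3 - v3) * c"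
    proof (rule coordMVT)
      show "((\<lambda>s. Xi p2 v1 v2 s) has_real_derivative (\<lambda>s. PD Xi 4 (mk4 p2 v1 v2 s)) s) (at s)" for s
        using deriv4[OF sm] by simp
      fix s assume "min u3 v3 \<le> s" "s \<le> max u3 v3"
      then have "\<bar>s\<bar> \<le> m" using between_abs[of u3 m v3 s] bp bu bv by blast
      then show "\<bar>(\<lambda>s. PD Xi 4 (mk4 p2 v1 v2 s)) s - PD Xi 4 0\<bar> < \<eta>" using bp bu bv by (simp add: nb)
    qed
    then show ?thesis using that by auto
  qed
  obtain d1 where d1: "\<bar>d1 - PD Xi 2 0\<bar> < \<eta>" "Xi p2 v1 v2 v3 - Xi p2 z1 v2 v3 = (v1 - z1) * d1"
  proof -
    have "\<exists>c. \<bar>c - PD Xi 2 0\<bar> < \<eta> \<and> (\<lambda>s. Xi p2 s v2 v3) v1 - (\<lambda>s. Xi p2 s v2 v3) z1 = (v1 - z1) * c"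
    proof (rule coordMVT)
      show "((\<lambda>s. Xi p2 s v2 v3) has_real_derivative (\<lambda>s. PD Xi 2 (mk4 p2 s v2 v3)) s) (at s)" for s
        using deriv2[OF sm] by simp
      fix s assume "min v1 z1 \<le> s" "s \<le> max v1 z1"
      then have "\<bar>s\<bar> \<le> m" using between_abs[of v1 m z1 s] bp bz bv by blast
      then show "\<bar>(\<lambda>s. PD Xi 2 (mk4 p2 s v2 v3)) s - PD Xi 2 0\<bar> < \<eta>" using bp bz bv by (simp add: nb)
    qed
    then show ?thesis using that by auto
  qed
  obtain d2 where d2: "\<bar>d2 - PD Xi 3 0\<bar> < \<eta>" "Xi p2 z1 v2 v3 - Xi p2 z1 z2 v3 = (v2 - z2) * d2"
  proof -
    have "\<exists>c. \<bar>c - PD Xi 3 0\<bar> < \<eta> \<and> (\<lambda>s. Xi p2 z1 s v3) v2 - (\<lambda>s. Xi p2 z1 s v3) z2 = (v2 - z2) * c"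
    proof (rule coordMVT)
      show "((\<lambda>s. Xi p2 z1 s v3) has_real_derivative (\<lambda>s. PD Xi 3 (mk4 p2 z1 s v3)) s) (at s)" for s
        using deriv3[OF sm] by simp
      fix s assume "min v2 z2 \<le> s" "s \<le> max v2 z2"
      then have "\<bar>s\<bar> \<le> m" using between_abs[of v2 m z2 s] bp bz bv by blast
      then show "\<bar>(\<lambda>s. PD Xi 3 (mk4 p2 z1 s v3)) s - PD Xi 3 0\<bar> < \<eta>" using bp bz bv by (simp add: nb)
    qed
    then show ?thesis using that by auto
  qed
  obtain d3 where d3: "\<bar>d3 - PD Xi 4 0\<bar> < \<eta>" "Xi p2 z1 z2 v3 - Xi p2 z1 z2 z3 = (v3 - z3) * d3"
  proof -
    have "\<exists>c. \<bar>c - PD Xi 4 0\<bar> < \<eta> \<and> (\<lambda>s. Xi p2 z1 z2 s) v3 - (\<lambda>s. Xi p2 z1 z2 s) z3 = (v3 - z3) * c"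
    proof (rule coordMVT)
      show "((\<lambda>s. Xi p2 z1 z2 s) has_real_derivative (\<lambda>s. PD Xi 4 (mk4 p2 z1 z2 s)) s) (at s)" for s
        using deriv4[OF sm] by simp
      fix s assume "min v3 z3 \<le> s" "s \<le> max v3 z3"
      then have "\<bar>s\<bar> \<le> m" using between_abs[of v3 m z3 s] bp bz bv by blast
      then show "\<bar>(\<lambda>s. PD Xi 4 (mk4 p2 z1 z2 s)) s - PD Xi 4 0\<bar> < \<eta>" using bp bz bv by (simp add: nb)
    qed
    then show ?thesis using that by auto
  qed
  show ?thesis
    apply (rule exI[of _ c0], rule exI[of _ c1], rule exI[of _ c2], rule exI[of _ c3],
        rule exI[of _ d1], rule exI[of _ d2], rule exI[of _ d3])
    using c0 c1 c2 c3 d1 d2 d3 by linarith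
qed

lemma prod_bound: "\<bar>q\<bar> \<le> (e::real) \<Longrightarrow> \<bar>c\<bar> \<le> B \<Longrightarrow> \<bar>q * c\<bar> \<le> e * B"
  by (simp add: abs_mult mult_mono')

theorem theoremA2:
  fixes Xi :: "real \<Rightarrow> real \<Rightarrow> real \<Rightarrow> real \<Rightarrow> real" and T :: real
  assumes "smooth4 Xi"
    and "Xi 0 0 0 0 = 0"
    and "deriv (\<lambda>p. Xi p 0 0 0) 0 < 0"
    and "T > 0"
  shows "\<exists>C \<epsilon>2 \<delta>. C > 0 \<and> \<epsilon>2 > 0 \<and> \<delta> > 0 \<and>
    (\<forall>(w1 :: nat \<Rightarrow> real \<Rightarrow> real \<Rightarrow> real) (w2 :: nat \<Rightarrow> real \<Rightarrow> real \<Rightarrow> real)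
       (\<psi>1 :: real \<Rightarrow> real) (\<psi>2 :: real \<Rightarrow> real).
       (\<forall>i\<in>{1..3}. C1_fun2 (w1 i) \<and> C1_fun2 (w2 i) \<and>
           periodic_t T (w1 i) \<and> periodic_t T (w2 i) \<and>
           C1_norm_le (w1 i) \<epsilon>2 \<and> C1_norm_le (w2 i) \<epsilon>2) \<and>
       periodic_solution T Xi w1 \<psi>1 \<and> periodic_solution T Xi w2 \<psi>2 \<and>
       (\<forall>t. \<bar>\<psi>1 t\<bar> \<le> \<delta>) \<and> (\<forall>t. \<bar>\<psi>2 t\<bar> \<le> \<delta>)
     \<longrightarrow>
       sup_norm1 (\<lambda>t. \<psi>1 t - \<psi>2 t) \<le>
         (1 + C * T * \<epsilon>2) * exp (Xi_psi0 Xi * T) * (1 / Xi_psi0 Xi) *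
         (\<Sum>i\<in>{1..3}. Xi_omega0 Xi i * sup_norm2 (\<lambda>t p. w1 i t p - w2 i t p))
     \<and> sup_norm1 (\<lambda>t. deriv \<psi>1 t - deriv \<psi>2 t) \<le>
         (1 + C * T * \<epsilon>2) * exp (Xi_psi0 Xi * T) *
         (\<Sum>i\<in>{1..3}. Xi_omega0 Xi i * sup_norm2 (\<lambda>t p. w1 i t p - w2 i t p))
         + (1 + C * \<epsilon>2) *
         (\<Sum>i\<in>{1..3}. Xi_omega0 Xi i * sup_norm2 (\<lambda>t p. w1 i t p - w2 i t p)))"
proof -
  note sm = assms(1)
  define a where "a = - deriv (\<lambda>p. Xi p 0 0 0) 0"
  have apos: "a > 0" using assms(3) by (simp add: a_def)
  have Xpsi: "Xi_psi0 Xi = a" using assms(3) by (simp add: a_def Xi_psi0_def)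
  have PD1: "PD Xi 1 0 = - a" by (simp add: a_def PD0_1)
  define b1 where "b1 = PD Xi 2 0"
  define b2 where "b2 = PD Xi 3 0"
  define b3 where "b3 = PD Xi 4 0"
  have Xom: "Xi_omega0 Xi 1 = 1 + \<bar>b1\<bar>" "Xi_omega0 Xi 2 = 1 + \<bar>b2\<bar>" "Xi_omega0 Xi 3 = 1 + \<bar>b3\<bar>"
    by (simp_all add: Xi_omega0_def b1_def b2_def b3_def PD0_2 PD0_3 PD0_4)
  define Bm where "Bm = 1 + \<bar>b1\<bar> + \<bar>b2\<bar> + \<bar>b3\<bar>"
  have Bm1: "Bm \<ge> 1" by (simp add: Bm_def)
  define K where "K = exp (a * T)"
  define \<eta> where "\<eta> = min 1 (a^2 * T / (4 + 2 * a * T))"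
  have aT: "a * T > 0" using apos assms(4) by simp
  have eta_pos: "\<eta> > 0" unfolding \<eta>_def using apos assms(4) aT by (simp add: add_pos_pos)
  have eta1: "\<eta> \<le> 1" unfolding \<eta>_def by simp
  have eta2: "\<eta> * (4 + 2 * a * T) \<le> a^2 * T"
  proof -
    have "\<eta> \<le> a^2 * T / (4 + 2 * a * T)" unfolding \<eta>_def by simp
    then show ?thesis using aT by (simp add: field_simps)
  qed
  have I1: "2 * \<eta> < a"
  proof -
    have "2 * \<eta> * (4 + 2 * a * T) \<le> 2 * a^2 * T" using eta2 by simp
    also have "\<dots> < a * (4 + 2 * a * T)" using apos by (simp add: power2_eq_square algebra_simps)
    finally show ?thesis using aT by (simp add: mult_less_cancel_right)
  qed
  have I2: "a + 2 * \<eta> \<le> K * (a - 2 * \<eta>)"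
  proof -
    have "1 + a * T \<le> K" unfolding K_def by (rule exp_ge_add_one_self)
    then have "(1 + a * T) * (a - 2 * \<eta>) \<le> K * (a - 2 * \<eta>)"
      using I1 by (intro mult_right_mono) auto
    moreover have "a + 2 * \<eta> \<le> (1 + a * T) * (a - 2 * \<eta>)"
      using eta2 by (simp add: power2_eq_square algebra_simps)
    ultimately show ?thesis by linarith
  qed
  obtain r1 where r1: "r1 > 0" "\<forall>x. norm x < r1 \<longrightarrow> \<bar>PD Xi 1 x - PD Xi 1 0\<bar> < \<eta>"
    using near0[OF sm eta_pos] by blast
  obtain r2 where r2: "r2 > 0" "\<forall>x. norm x < r2 \<longrightarrow> \<bar>PD Xi 2 x - PD Xi 2 0\<bar> < \<eta>"
    using near0[OF sm eta_pos] by blast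
  obtain r3 where r3: "r3 > 0" "\<forall>x. norm x < r3 \<longrightarrow> \<bar>PD Xi 3 x - PD Xi 3 0\<bar> < \<eta>"
    using near0[OF sm eta_pos] by blast
  obtain r4 where r4: "r4 > 0" "\<forall>x. norm x < r4 \<longrightarrow> \<bar>PD Xi 4 x - PD Xi 4 0\<bar> < \<eta>"
    using near0[OF sm eta_pos] by blast
  define r where "r = min (min r1 r2) (min r3 r4)"
  have rpos: "r > 0" using r1 r2 r3 r4 by (simp add: r_def)
  have near: "\<forall>k x. norm x < r \<longrightarrow> \<bar>PD Xi k x - PD Xi k 0\<bar> < \<eta>"
  proof (intro allI impI)
    fix k :: 4 and x :: "real^4" assume "norm x < r"
    then show "\<bar>PD Xi k x - PD Xi k 0\<bar> < \<eta>"
      using exhaust_4[of k] r1 r2 r3 r4 unfolding r_def by auto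
  qed
  define \<epsilon> where "\<epsilon> = min (r / 8) (\<eta> / (3 * Bm))"
  have eps_pos: "\<epsilon> > 0" using rpos eta_pos Bm1 by (simp add: \<epsilon>_def)
  have eps_r: "4 * \<epsilon> < r" using rpos by (simp add: \<epsilon>_def)
  have eps_B: "3 * (\<epsilon> * Bm) \<le> \<eta>"
  proof -
    have "\<epsilon> \<le> \<eta> / (3 * Bm)" by (simp add: \<epsilon>_def)
    then show ?thesis using Bm1 by (simp add: field_simps)
  qed
  show ?thesis
  proof (rule exI[of _ 1], rule exI[of _ \<epsilon>], rule exI[of _ \<epsilon>], intro conjI allI impI)
    show "(0::real) < 1" by simp
    show "\<epsilon> > 0" by (rule eps_pos)
    show "\<epsilon> > 0" by (rule eps_pos)
    fix w1 w2 :: "nat \<Rightarrow> real \<Rightarrow> real \<Rightarrow> real" and \<psi>1 \<psi>2 :: "real \<Rightarrow> real"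
    assume H: "(\<forall>i\<in>{1..3}. C1_fun2 (w1 i) \<and> C1_fun2 (w2 i) \<and>
           periodic_t T (w1 i) \<and> periodic_t T (w2 i) \<and>
           C1_norm_le (w1 i) \<epsilon> \<and> C1_norm_le (w2 i) \<epsilon>) \<and>
       periodic_solution T Xi w1 \<psi>1 \<and> periodic_solution T Xi w2 \<psi>2 \<and>
       (\<forall>t. \<bar>\<psi>1 t\<bar> \<le> \<epsilon>) \<and> (\<forall>t. \<bar>\<psi>2 t\<bar> \<le> \<epsilon>)"
    have Hi: "C1_fun2 (w1 i) \<and> C1_norm_le (w1 i) \<epsilon> \<and> C1_norm_le (w2 i) \<epsilon>"
      if "i \<in> {1,2,3}" for i using H that by auto
    define D where "D i = sup_norm2 (\<lambda>t p. w1 i t p - w2 i t p)" for i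
    define S where "S = (1 + \<bar>b1\<bar>) * D 1 + (1 + \<bar>b2\<bar>) * D 2 + (1 + \<bar>b3\<bar>) * D 3"
    have Seq: "(\<Sum>i\<in>{1..3}. Xi_omega0 Xi i * sup_norm2 (\<lambda>t p. w1 i t p - w2 i t p)) = S"
      unfolding sum13 Xom S_def D_def by (rule refl)
    have Dle: "\<bar>w1 i t p - w2 i t p\<bar> \<le> D i" if "i \<in> {1,2,3}" for i t p
      unfolding D_def
    proof (rule le_sup_norm2[of _ "2 * \<epsilon>"], intro allI)
      fix t p
      show "\<bar>w1 i t p - w2 i t p\<bar> \<le> 2 * \<epsilon>"
      proof -
        have "\<bar>w1 i t p\<bar> \<le> \<epsilon>" "\<bar>w2 i t p\<bar> \<le> \<epsilon>"
          using Hi[OF that] unfolding C1_norm_le_def by blast+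
        moreover have "\<bar>w1 i t p - w2 i t p\<bar> \<le> \<bar>w1 i t p\<bar> + \<bar>w2 i t p\<bar>" by (rule abs_triangle_ineq4)
        ultimately show ?thesis by linarith
      qed
    qed
    have D0: "D i \<ge> 0" if "i \<in> {1,2,3}" for i using Dle[OF that, of 0 0] by linarith
    have S0: "S \<ge> 0" unfolding S_def using D0 by (auto intro!: add_nonneg_nonneg mult_nonneg_nonneg)
    have wb: "\<bar>w1 i t p\<bar> \<le> \<epsilon>" "\<bar>w2 i t p\<bar> \<le> \<epsilon>" if "i \<in> {1,2,3}" for i t p
      using Hi[OF that] unfolding C1_norm_le_def by auto
    have qex: "\<exists>q. \<bar>q\<bar> \<le> \<epsilon> \<and> w1 i t x - w1 i t y = (x - y) * q" if "i \<in> {1,2,3}" for i t x y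
    proof -
      have c1: "C1_fun2 (w1 i)" using Hi[OF that] by blast
      obtain z where "w1 i t x - w1 i t y = (x - y) * deriv (\<lambda>s. w1 i t s) z"
        using mvt_any[of "\<lambda>s. w1 i t s" "\<lambda>p. deriv (\<lambda>s. w1 i t s) p" y x] C1_deriv[OF c1] by blast
      moreover have "\<bar>deriv (\<lambda>s. w1 i t s) z\<bar> \<le> \<epsilon>"
      proof -
        have "C1_norm_le (w1 i) \<epsilon>" using Hi[OF that] by blast
        then show ?thesis unfolding C1_norm_le_def by blast
      qed
      ultimately show ?thesis by (intro exI[of _ "deriv (\<lambda>s. w1 i t s) z"]) simp
    qed
    define e where "e t = \<psi>1 t - \<psi>2 t" for t
    define E where "E t = deriv \<psi>1 t - deriv \<psi>2 t" for t
    have sol1: "\<forall>t. \<psi>1 (t + T) = \<psi>1 t" "\<forall>t. (\<psi>1 has_real_derivative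
             Xi (\<psi>1 t) (w1 1 t (\<psi>1 t)) (w1 2 t (\<psi>1 t)) (w1 3 t (\<psi>1 t))) (at t)"
      using H unfolding periodic_solution_def by auto
    have sol2: "\<forall>t. \<psi>2 (t + T) = \<psi>2 t" "\<forall>t. (\<psi>2 has_real_derivative
             Xi (\<psi>2 t) (w2 1 t (\<psi>2 t)) (w2 2 t (\<psi>2 t)) (w2 3 t (\<psi>2 t))) (at t)"
      using H unfolding periodic_solution_def by auto
    have Edef: "E t = Xi (\<psi>1 t) (w1 1 t (\<psi>1 t)) (w1 2 t (\<psi>1 t)) (w1 3 t (\<psi>1 t))
       - Xi (\<psi>2 t) (w2 1 t (\<psi>2 t)) (w2 2 t (\<psi>2 t)) (w2 3 t (\<psi>2 t))" for t
      unfolding E_def using DERIV_imp_deriv[OF sol1(2)[rule_format, of t]] DERIV_imp_deriv[OF sol2(2)[rule_format, of t]] by simp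
    have eder: "(e has_real_derivative E t) (at t)" for t
      unfolding e_def E_def using DERIV_imp_deriv[OF sol1(2)[rule_format, of t]] DERIV_imp_deriv[OF sol2(2)[rule_format, of t]]
        DERIV_diff[OF sol1(2)[rule_format, of t] sol2(2)[rule_format, of t]] by simp
    have key: "\<exists>A g. E t = A * e t + g \<and> \<bar>A + a\<bar> \<le> 2 * \<eta> \<and> \<bar>g\<bar> \<le> S" for t
    proof -
      define p1 where "p1 = \<psi>1 t"
      define p2 where "p2 = \<psi>2 t"
      have bp: "\<bar>p1\<bar> \<le> \<epsilon>" "\<bar>p2\<bar> \<le> \<epsilon>" using H by (auto simp: p1_def p2_def)
      obtain q1 where q1: "\<bar>q1\<bar> \<le> \<epsilon>" "w1 1 t p1 - w1 1 t p2 = (p1 - p2) * q1" using qex[of 1 t p1 p2] by auto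
      obtain q2 where q2: "\<bar>q2\<bar> \<le> \<epsilon>" "w1 2 t p1 - w1 2 t p2 = (p1 - p2) * q2" using qex[of 2 t p1 p2] by auto
      obtain q3 where q3: "\<bar>q3\<bar> \<le> \<epsilon>" "w1 3 t p1 - w1 3 t p2 = (p1 - p2) * q3" using qex[of 3 t p1 p2] by auto
      obtain c0 c1 c2 c3 d1 d2 d3 where P:
        "Xi p1 (w1 1 t p1) (w1 2 t p1) (w1 3 t p1) - Xi p2 (w2 1 t p2) (w2 2 t p2) (w2 3 t p2)
          = (p1 - p2) * c0 + (w1 1 t p1 - w1 1 t p2) * c1 + (w1 2 t p1 - w1 2 t p2) * c2
        + (w1 3 t p1 - w1 3 t p2) * c3 + (w1 1 t p2 - w2 1 t p2) * d1
        + (w1 2 t p2 - w2 2 t p2) * d2 + (w1 3 t p2 - w2 3 t p2) * d3"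
        "\<bar>c0 - PD Xi 1 0\<bar> < \<eta>" "\<bar>c1 - PD Xi 2 0\<bar> < \<eta>" "\<bar>c2 - PD Xi 3 0\<bar> < \<eta>"
        "\<bar>c3 - PD Xi 4 0\<bar> < \<eta>" "\<bar>d1 - PD Xi 2 0\<bar> < \<eta>" "\<bar>d2 - PD Xi 3 0\<bar> < \<eta>"
        "\<bar>d3 - PD Xi 4 0\<bar> < \<eta>"
      proof -
        have i: "(1::nat) \<in> {1,2,3}" "(2::nat) \<in> {1,2,3}" "(3::nat) \<in> {1,2,3}" by auto
        show ?thesis
          using pointwise[OF sm near eps_r bp wb(1)[of 1 t p1, OF i(1)] wb(1)[of 2 t p1, OF i(2)]
            wb(1)[of 3 t p1, OF i(3)] wb(1)[of 1 t p2, OF i(1)] wb(1)[of 2 t p2, OF i(2)]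
            wb(1)[of 3 t p2, OF i(3)] wb(2)[of 1 t p2, OF i(1)] wb(2)[of 2 t p2, OF i(2)]
            wb(2)[of 3 t p2, OF i(3)]] that by blast
      qed
      define A where "A = c0 + q1 * c1 + q2 * c2 + q3 * c3"
      define g where "g = (w1 1 t p2 - w2 1 t p2) * d1 + (w1 2 t p2 - w2 2 t p2) * d2
          + (w1 3 t p2 - w2 3 t p2) * d3"
      have "E t = A * e t + g"
        unfolding Edef e_def A_def g_def p1_def[symmetric] p2_def[symmetric] P(1) q1 q2 q3
        by (simp add: algebra_simps)
      moreover have "\<bar>A + a\<bar> \<le> 2 * \<eta>"
      proof -
        have "\<bar>q1 * c1\<bar> \<le> \<epsilon> * Bm" using q1 P(3) eta1 by (intro prod_bound) (auto simp: Bm_def b1_def)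
        moreover have "\<bar>q2 * c2\<bar> \<le> \<epsilon> * Bm" using q2 P(4) eta1 by (intro prod_bound) (auto simp: Bm_def b2_def)
        moreover have "\<bar>q3 * c3\<bar> \<le> \<epsilon> * Bm" using q3 P(5) eta1 by (intro prod_bound) (auto simp: Bm_def b3_def)
        ultimately show ?thesis using P(2) PD1 eps_B unfolding A_def by linarith
      qed
      moreover have "\<bar>g\<bar> \<le> S"
      proof -
        have "\<bar>(w1 1 t p2 - w2 1 t p2) * d1\<bar> \<le> D 1 * (1 + \<bar>b1\<bar>)"
          using Dle[of 1 t p2] P(6) eta1 by (intro prod_bound) (auto simp: b1_def)
        moreover have "\<bar>(w1 2 t p2 - w2 2 t p2) * d2\<bar> \<le> D 2 * (1 + \<bar>b2\<bar>)"
          using Dle[of 2 t p2] P(7) eta1 by (intro prod_bound) (auto simp: b2_def)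
        moreover have "\<bar>(w1 3 t p2 - w2 3 t p2) * d3\<bar> \<le> D 3 * (1 + \<bar>b3\<bar>)"
          using Dle[of 3 t p2] P(8) eta1 by (intro prod_bound) (auto simp: b3_def)
        ultimately show ?thesis unfolding g_def S_def by (simp add: algebra_simps) linarith
      qed
      ultimately show ?thesis by blast
    qed
    have eper: "\<forall>t. e (t + T) = e t" using sol1(1) sol2(1) by (simp add: e_def)
    have econt: "continuous_on UNIV e"
      using eder by (meson DERIV_isCont continuous_at_imp_continuous_on)
    obtain t0 where t0: "\<forall>t. \<bar>e t\<bar> \<le> \<bar>e t0\<bar>" using periodic_max[OF assms(4) eper econt] by blast
    have ebound: "\<bar>e t\<bar> \<le> S / (a - 2 * \<eta>)" for t
    proof (cases "e t0 = 0")
      case True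
      then show ?thesis using t0[rule_format, of t] S0 I1 by simp
    next
      case False
      have "E t0 = 0" by (rule deriv_zero_absmax[OF eder t0 False])
      obtain A g where Ag: "E t0 = A * e t0 + g" "\<bar>A + a\<bar> \<le> 2 * \<eta>" "\<bar>g\<bar> \<le> S" using key by blast
      have "\<bar>A\<bar> \<ge> a - 2 * \<eta>" using Ag(2) by linarith
      then have "(a - 2 * \<eta>) * \<bar>e t0\<bar> \<le> \<bar>A\<bar> * \<bar>e t0\<bar>" by (simp add: mult_right_mono)
      also have "\<dots> = \<bar>g\<bar>" using Ag(1) \<open>E t0 = 0\<close> by (simp add: abs_mult[symmetric] eq_neg_iff_add_eq_0 add.commute)
      finally have "(a - 2 * \<eta>) * \<bar>e t0\<bar> \<le> S" using Ag(3) by linarith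
      then have "\<bar>e t0\<bar> \<le> S / (a - 2 * \<eta>)" using I1 by (simp add: field_simps)
      then show ?thesis using t0 by (meson order_trans)
    qed
    have SK: "S / (a - 2 * \<eta>) \<le> K * S / a"
    proof -
      have "a \<le> K * (a - 2 * \<eta>)" using I2 eta_pos by linarith
      then have "S * a \<le> S * (K * (a - 2 * \<eta>))" using S0 by (rule mult_left_mono)
      then have "S * a \<le> K * S * (a - 2 * \<eta>)" by (simp add: algebra_simps)
      then show ?thesis using I1 apos by (simp add: field_simps)
    qed
    have Kpos: "K > 0" by (simp add: K_def)
    have fac1: "1 + 1 * T * \<epsilon> \<ge> 1" "1 + 1 * \<epsilon> \<ge> 1" using assms(4) eps_pos by auto
    show "sup_norm1 (\<lambda>t. \<psi>1 t - \<psi>2 t) \<le>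
         (1 + 1 * T * \<epsilon>) * exp (Xi_psi0 Xi * T) * (1 / Xi_psi0 Xi) *
         (\<Sum>i\<in>{1..3}. Xi_omega0 Xi i * sup_norm2 (\<lambda>t p. w1 i t p - w2 i t p))"
    proof -
      have "K * S / a \<le> (1 + 1 * T * \<epsilon>) * K * (1 / a) * S"
      proof -
        have "0 \<le> K * S / a" using Kpos S0 apos by simp
        then have "1 * (K * S / a) \<le> (1 + 1 * T * \<epsilon>) * (K * S / a)" by (rule mult_right_mono[OF fac1(1)])
        then show ?thesis by (simp add: mult_ac)
      qed
      then have "\<forall>t. \<bar>\<psi>1 t - \<psi>2 t\<bar> \<le> (1 + 1 * T * \<epsilon>) * K * (1 / a) * S"
        using ebound SK unfolding e_def by (meson order_trans)
      then show ?thesis unfolding sup_norm1_def Seq Xpsi K_def[symmetric] by (intro cSUP_least) auto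
    qed
    show "sup_norm1 (\<lambda>t. deriv \<psi>1 t - deriv \<psi>2 t) \<le>
         (1 + 1 * T * \<epsilon>) * exp (Xi_psi0 Xi * T) *
         (\<Sum>i\<in>{1..3}. Xi_omega0 Xi i * sup_norm2 (\<lambda>t p. w1 i t p - w2 i t p))
         + (1 + 1 * \<epsilon>) *
         (\<Sum>i\<in>{1..3}. Xi_omega0 Xi i * sup_norm2 (\<lambda>t p. w1 i t p - w2 i t p))"
    proof -
      have "\<bar>E t\<bar> \<le> (1 + 1 * T * \<epsilon>) * K * S + (1 + 1 * \<epsilon>) * S" for t
      proof -
        obtain A g where Ag: "E t = A * e t + g" "\<bar>A + a\<bar> \<le> 2 * \<eta>" "\<bar>g\<bar> \<le> S" using key by blast
        have Aa: "\<bar>A\<bar> \<le> a + 2 * \<eta>" using Ag(2) apos by linarith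
        have "\<bar>E t\<bar> \<le> \<bar>A\<bar> * \<bar>e t\<bar> + \<bar>g\<bar>" using Ag(1) by (simp add: abs_mult[symmetric] abs_triangle_ineq)
        also have "\<dots> \<le> (a + 2 * \<eta>) * (S / (a - 2 * \<eta>)) + S"
          using Aa ebound[of t] Ag(3) by (intro add_mono mult_mono) auto
        also have "\<dots> \<le> K * S + S"
        proof -
          have "(a + 2 * \<eta>) * S \<le> K * (a - 2 * \<eta>) * S" using I2 S0 by (simp add: mult_right_mono)
          then have "(a + 2 * \<eta>) * (S / (a - 2 * \<eta>)) \<le> K * S" using I1 by (simp add: field_simps)
          then show ?thesis by simp
        qed
        also have "\<dots> \<le> (1 + 1 * T * \<epsilon>) * K * S + (1 + 1 * \<epsilon>) * S"
        proof (rule add_mono)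
          have "1 * (K * S) \<le> (1 + 1 * T * \<epsilon>) * (K * S)"
            using Kpos S0 by (intro mult_right_mono[OF fac1(1)]) simp
          then show "K * S \<le> (1 + 1 * T * \<epsilon>) * K * S" by (simp add: mult_ac)
          have "1 * S \<le> (1 + 1 * \<epsilon>) * S" using S0 by (intro mult_right_mono[OF fac1(2)])
          then show "S \<le> (1 + 1 * \<epsilon>) * S" by simp
        qed
        finally show ?thesis by simp
      qed
      then show ?thesis unfolding sup_norm1_def Seq Xpsi K_def[symmetric] E_def
        by (intro cSUP_least) auto
    qed
  qed
qed

end
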